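(* Let $d\ge1$ and let $h_1<h_2<\dots$ be a strictly increasing sequence of integers with $h_1\ge2$. Suppose that $L_d(h_1,h_2,\dots)$ and $L_d(h_1-1,h_2-1,h_3-1,\dots)$ are perfect lattices of minimum $4$, and that $L_{d+1}(h_1,h_2,\dots)\subset\mathbb Z^{d+3}$ contains a vector of norm $4$ whose first and last coordinates are both equal to $1$. Then $L_{d+1}(h_1,h_2,\dots)$ is perfect.
   Context: For a strictly increasing (finite or infinite, possibly empty) sequence of positive integers $h_1<h_2<\dots$ (called holes) and an integer $d\ge1$, let $s_1<s_2<\dots<s_{d+2}$ be the $d+2$ smallest elements of $\{1,2,3,\dots\}\setminus\{h_1,h_2,\dots\}$, and define $L_d(h_1,h_2,\dots)=\{x\in\mathbb Z^{d+2}:\ \sum_{i=1}^{d+2}x_i=0,\ \sum_{i=1}^{d+2}s_ix_i=0\}$ with the standard inner product of $\mathbb R^{d+2}$; it is an even integral lattice of rank $d$ with no vectors of norm $2$. Norm means squared Euclidean length; the minimum is the smallest norm of a nonzero element. A lattice $L$ of rank $n$ is perfect if $\{v\otimes v\}$, $v$ ranging over its minimal vectors, spans the $\binom{n+1}{2}$-dimensional space of symmetric tensors in $(L\otimes\mathbb R)\otimes(L\otimes\mathbb R)$. *)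

theory Defs
  imports Complex_Main "HOL-Library.Infinite_Set"
begin

text \<open>Holes: a strictly increasing (finite or infinite, possibly empty) sequence of
positive integers is represented by its set of values H (a set of positive naturals).
Vectors of Z^k are represented as functions nat => int supported on indices 0..k-1
(coordinate x_i of the paper is x (i-1)).\<close>

definition nonholes :: "nat set \<Rightarrow> nat set" where
  "nonholes H = {n. 1 \<le> n \<and> n \<notin> H}"

text \<open>s H i = the (i+1)-th smallest non-hole (0-indexed), i.e. s_{i+1} of the paper.\<close>
definition s :: "nat set \<Rightarrow> nat \<Rightarrow> nat" where
  "s H i = (if finite (nonholes H) then sorted_list_of_set (nonholes H) ! i
            else enumerate (nonholes H) i)"

definition enough_nonholes :: "nat \<Rightarrow> nat set \<Rightarrow> bool" where
  "enough_nonholes m H \<longleftrightarrow> infinite (nonholes H) \<or> m \<le> card (nonholes H)"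

definition L :: "nat \<Rightarrow> nat set \<Rightarrow> (nat \<Rightarrow> int) set" where
  "L d H = {x. (\<forall>i\<ge>d+2. x i = 0) \<and> (\<Sum>i<d+2. x i) = 0
                \<and> (\<Sum>i<d+2. int (s H i) * x i) = 0}"

definition sqnorm :: "nat \<Rightarrow> (nat \<Rightarrow> int) \<Rightarrow> int" where
  "sqnorm k x = (\<Sum>i<k. (x i)^2)"

definition has_minimum :: "nat \<Rightarrow> (nat \<Rightarrow> int) set \<Rightarrow> int \<Rightarrow> bool" where
  "has_minimum k \<Lambda> m \<longleftrightarrow> (\<exists>v\<in>\<Lambda>. v \<noteq> (\<lambda>_. 0) \<and> sqnorm k v = m)
      \<and> (\<forall>w\<in>\<Lambda>. w \<noteq> (\<lambda>_. 0) \<longrightarrow> m \<le> sqnorm k w)"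

definition min_vecs :: "nat \<Rightarrow> (nat \<Rightarrow> int) set \<Rightarrow> (nat \<Rightarrow> int) set" where
  "min_vecs k \<Lambda> = {v\<in>\<Lambda>. v \<noteq> (\<lambda>_. 0) \<and> (\<forall>w\<in>\<Lambda>. w \<noteq> (\<lambda>_. 0) \<longrightarrow> sqnorm k v \<le> sqnorm k w)}"

definition real_span :: "(nat \<Rightarrow> int) set \<Rightarrow> (nat \<Rightarrow> real) set" where
  "real_span \<Lambda> = {y. \<exists>S c. finite S \<and> S \<subseteq> \<Lambda> \<and>
        y = (\<lambda>i. \<Sum>v\<in>S. c v * real_of_int (v i))}"

text \<open>Symmetric tensors in V \<otimes> V, V = L \<otimes> R, realised as symmetric matrices
(functions nat => nat => real) all of whose rows lie in V.\<close>
definition sym_tensors :: "(nat \<Rightarrow> int) set \<Rightarrow> (nat \<Rightarrow> nat \<Rightarrow> real) set" where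
  "sym_tensors \<Lambda> = {M. (\<forall>i j. M i j = M j i) \<and> (\<forall>i. M i \<in> real_span \<Lambda>)}"

definition tensor_span :: "(nat \<Rightarrow> int) set \<Rightarrow> (nat \<Rightarrow> nat \<Rightarrow> real) set" where
  "tensor_span S0 = {M. \<exists>S c. finite S \<and> S \<subseteq> S0 \<and>
        M = (\<lambda>i j. \<Sum>v\<in>S. c v * real_of_int (v i) * real_of_int (v j))}"

definition perfect :: "nat \<Rightarrow> (nat \<Rightarrow> int) set \<Rightarrow> bool" where
  "perfect k \<Lambda> \<longleftrightarrow> tensor_span (min_vecs k \<Lambda>) = sym_tensors \<Lambda>"

end

theory Submission
  imports Defs
begin


lemma Least_Min':
  "finite S \<Longrightarrow> S \<noteq> {} \<Longrightarrow> (LEAST n. n \<in> S) = Min (S::'a::wellorder set)"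
  by (rule Least_equality) auto

lemma sorted_enum:
  "finite S \<Longrightarrow> n < card S \<Longrightarrow> sorted_list_of_set S ! n = enumerate S n"
proof (induction n arbitrary: S)
  case 0
  then have "S \<noteq> {}" by auto
  then show ?case using 0 Least_Min'[of S]
    by (simp add: sorted_list_of_set_nonempty enumerate_0)
next
  case (Suc n)
  then have ne: "S \<noteq> {}" by auto
  have "enumerate S 0 = Min S" using Suc ne Least_Min'[of S] by (simp add: enumerate_0)
  then have "sorted_list_of_set S ! Suc n = sorted_list_of_set (S - {enumerate S 0}) ! n"
    using Suc ne by (simp add: sorted_list_of_set_nonempty)
  also have "\<dots> = enumerate (S - {enumerate S 0}) n"
    apply (rule Suc.IH)
    using Suc.prems \<open>enumerate S 0 = Min S\<close> ne by auto
  finally show ?case by (simp add: enumerate_Suc')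
qed

lemma s_enum:
  assumes "enough_nonholes m H" "i < m"
  shows "s H i = enumerate (nonholes H) i"
  using assms unfolding s_def enough_nonholes_def by (auto intro: sorted_enum)

lemma s_mono:
  assumes "enough_nonholes m H" "i < j" "j < m"
  shows "s H i < s H j"
proof -
  have "s H i = enumerate (nonholes H) i" "s H j = enumerate (nonholes H) j"
    using assms s_enum by auto
  moreover have "enumerate (nonholes H) i < enumerate (nonholes H) j"
  proof (cases "finite (nonholes H)")
    case True
    then have "j < card (nonholes H)" using assms unfolding enough_nonholes_def by auto
    then show ?thesis using True assms(2) by (intro finite_enumerate_mono)
  next
    case False
    then show ?thesis using assms(2) by (intro enumerate_mono)
  qed
  ultimately show ?thesis by simp
qed

lemma enum_Suc0:
  assumes "A \<noteq> {}" shows "enumerate (Suc ` A) 0 = Suc (enumerate A 0)"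
proof -
  obtain a where a: "a \<in> A" using assms by auto
  have "(LEAST m. m \<in> Suc ` A) = Suc (LEAST m. m \<in> A)"
  proof (rule Least_equality)
    show "Suc (LEAST m. m \<in> A) \<in> Suc ` A" using a by (auto intro: LeastI)
    show "\<And>y. y \<in> Suc ` A \<Longrightarrow> Suc (LEAST m. m \<in> A) \<le> y"
      by (auto intro: Least_le)
  qed
  then show ?thesis by (simp add: enumerate_0)
qed

lemma enumerate_Suc_image:
  "infinite A \<or> n < card A \<Longrightarrow> enumerate (Suc ` A) n = Suc (enumerate A n)"
proof (induction n arbitrary: A)
  case 0
  then have ne: "A \<noteq> {}" by auto
  then show ?case by (rule enum_Suc0)
next
  case (Suc n)
  then have ne: "A \<noteq> {}" by auto
  have e0: "enumerate (Suc ` A) 0 = Suc (enumerate A 0)"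
    using ne by (rule enum_Suc0)
  have a0: "enumerate A 0 \<in> A" using ne by (auto simp: enumerate_0 intro: LeastI)
  have "Suc ` A - {Suc (enumerate A 0)} = Suc ` (A - {enumerate A 0})" by auto
  then have "enumerate (Suc ` A) (Suc n) = enumerate (Suc ` (A - {enumerate A 0})) n"
    by (simp only: enumerate_Suc' e0)
  also have "\<dots> = Suc (enumerate (A - {enumerate A 0}) n)"
    apply (rule Suc.IH) using Suc.prems a0 by (auto simp: card_Diff_singleton)
  finally show ?case by (simp only: enumerate_Suc')
qed


lemma nonholes_shift:
  assumes "\<forall>h\<in>H. 2 \<le> h"
  shows "nonholes H - {1} = Suc ` nonholes ((\<lambda>h. h - 1) ` H)"
proof (rule set_eqI)
  fix n
  show "n \<in> nonholes H - {1} \<longleftrightarrow> n \<in> Suc ` nonholes ((\<lambda>h. h - 1) ` H)"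
  proof
    assume n: "n \<in> nonholes H - {1}"
    then have "n \<ge> 2" "n \<notin> H" by (auto simp: nonholes_def)
    have "n - 1 \<notin> (\<lambda>h. h - 1) ` H"
    proof
      assume "n - 1 \<in> (\<lambda>h. h - 1) ` H"
      then obtain h where h: "h \<in> H" "n - 1 = h - 1" by auto
      then have "h \<ge> 2" using assms by auto
      then have "h = n" using h \<open>n \<ge> 2\<close> by linarith
      then show False using h \<open>n \<notin> H\<close> by simp
    qed
    then have "n - 1 \<in> nonholes ((\<lambda>h. h - 1) ` H)"
      using \<open>n \<ge> 2\<close> unfolding nonholes_def by auto
    moreover have "n = Suc (n - 1)" using \<open>n \<ge> 2\<close> by simp
    ultimately show "n \<in> Suc ` nonholes ((\<lambda>h. h - 1) ` H)" by blast
  next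
    assume "n \<in> Suc ` nonholes ((\<lambda>h. h - 1) ` H)"
    then obtain m where m: "n = Suc m" "m \<ge> 1" "m \<notin> (\<lambda>h. h - 1) ` H"
      by (auto simp: nonholes_def)
    have "Suc m \<notin> H"
    proof
      assume "Suc m \<in> H"
      then have "m \<in> (\<lambda>h. h - 1) ` H" by force
      with m show False by simp
    qed
    then show "n \<in> nonholes H - {1}" using m by (auto simp: nonholes_def)
  qed
qed

lemma s_shift:
  assumes H2: "\<forall>h\<in>H. 2 \<le> h" and en: "enough_nonholes (Suc m) H" and im: "i < m"
  shows "s ((\<lambda>h. h - 1) ` H) i + 1 = s H (Suc i)"
proof -
  define N where "N = nonholes H"
  define N' where "N' = nonholes ((\<lambda>h. h - 1) ` H)"
  have sh: "N - {1} = Suc ` N'" unfolding N_def N'_def using nonholes_shift[OF H2] .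
  have one: "1 \<in> N" using H2 unfolding N_def nonholes_def by force
  have ge1: "\<forall>n\<in>N. 1 \<le> n" unfolding N_def nonholes_def by auto
  have e0: "enumerate N 0 = 1"
    unfolding enumerate_0 by (rule Least_equality) (use one ge1 in auto)
  have Neq: "N = insert 1 (Suc ` N')" using sh one by blast
  have n1: "1 \<notin> Suc ` N'" unfolding N'_def nonholes_def by auto
  have fin: "finite N \<longleftrightarrow> finite N'" using Neq by (auto simp: finite_image_iff)
  have cardeq: "finite N \<Longrightarrow> card N = Suc (card N')"
    using Neq n1 fin by (simp add: card_image)
  have en': "infinite N' \<or> i < card N'"
    using en im fin cardeq unfolding enough_nonholes_def N_def[symmetric] by force
  have "s ((\<lambda>h. h - 1) ` H) i = enumerate N' i"
    unfolding N'_def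
    by (rule s_enum[of "Suc i"]) (use en' in \<open>auto simp: enough_nonholes_def N'_def\<close>)
  moreover have "s H (Suc i) = enumerate N (Suc i)"
    unfolding N_def by (rule s_enum[OF en]) (use im in auto)
  moreover have "enumerate N (Suc i) = Suc (enumerate N' i)"
    unfolding enumerate_Suc' e0 sh using en' by (rule enumerate_Suc_image)
  ultimately show ?thesis by simp
qed



definition ri :: "(nat \<Rightarrow> int) \<Rightarrow> nat \<Rightarrow> real" where
  "ri v = (\<lambda>i. real_of_int (v i))"

lemma RS_zero: "(\<lambda>_. 0) \<in> real_span \<Lambda>"
  unfolding real_span_def by (rule CollectI, rule exI[of _ "{}"]) auto

lemma RS_base: "v \<in> \<Lambda> \<Longrightarrow> ri v \<in> real_span \<Lambda>"
  unfolding real_span_def ri_def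
  by (rule CollectI, rule exI[of _ "{v}"], rule exI[of _ "\<lambda>_. 1"]) auto

lemma RS_scale: "y \<in> real_span \<Lambda> \<Longrightarrow> (\<lambda>i. a * y i) \<in> real_span \<Lambda>"
proof -
  assume "y \<in> real_span \<Lambda>"
  then obtain S c where "finite S" "S \<subseteq> \<Lambda>" "y = (\<lambda>i. \<Sum>v\<in>S. c v * real_of_int (v i))"
    unfolding real_span_def by auto
  then show ?thesis unfolding real_span_def
    by (intro CollectI exI[of _ S] exI[of _ "\<lambda>v. a * c v"])
       (auto simp: sum_distrib_left mult.assoc)
qed

lemma RS_add:
  assumes "y \<in> real_span \<Lambda>" "z \<in> real_span \<Lambda>"
  shows "(\<lambda>i. y i + z i) \<in> real_span \<Lambda>"
proof -
  obtain S c where S: "finite S" "S \<subseteq> \<Lambda>" "y = (\<lambda>i. \<Sum>v\<in>S. c v * real_of_int (v i))"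
    using assms(1) unfolding real_span_def by auto
  obtain T e where T: "finite T" "T \<subseteq> \<Lambda>" "z = (\<lambda>i. \<Sum>v\<in>T. e v * real_of_int (v i))"
    using assms(2) unfolding real_span_def by auto
  define c' where "c' v = (if v \<in> S then c v else 0)" for v
  define e' where "e' v = (if v \<in> T then e v else 0)" for v
  have 1: "(\<Sum>v\<in>S. c v * real_of_int (v i)) = (\<Sum>v\<in>S \<union> T. c' v * real_of_int (v i))" for i
    by (rule sum.mono_neutral_cong_left) (auto simp: S T c'_def)
  have 2: "(\<Sum>v\<in>T. e v * real_of_int (v i)) = (\<Sum>v\<in>S \<union> T. e' v * real_of_int (v i))" for i
    by (rule sum.mono_neutral_cong_left) (auto simp: S T e'_def)
  show ?thesis unfolding real_span_def
    apply (intro CollectI exI[of _ "S \<union> T"] exI[of _ "\<lambda>v. c' v + e' v"])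
    using S T 1 2 by (auto simp: distrib_right sum.distrib)
qed

lemma RS_sum:
  assumes "finite S" "\<forall>v\<in>S. g v \<in> real_span \<Lambda>"
  shows "(\<lambda>i. \<Sum>v\<in>S. c v * g v i) \<in> real_span \<Lambda>"
  using assms
proof (induction S rule: finite_induct)
  case empty
  then show ?case using RS_zero by simp
next
  case (insert x F)
  then have "(\<lambda>i. c x * g x i + (\<Sum>v\<in>F. c v * g v i)) \<in> real_span \<Lambda>"
    by (intro RS_add RS_scale) auto
  then show ?case using insert by simp
qed

lemma RS_coord0:
  assumes "\<forall>v\<in>\<Lambda>. v k = 0" "y \<in> real_span \<Lambda>"
  shows "y k = 0"
  using assms unfolding real_span_def by (auto intro!: sum.neutral dest!: subsetD)

lemma TS_zero: "(\<lambda>_ _. 0) \<in> tensor_span \<Lambda>"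
  unfolding tensor_span_def by (rule CollectI, rule exI[of _ "{}"]) auto

lemma TS_base: "v \<in> \<Lambda> \<Longrightarrow> (\<lambda>i j. ri v i * ri v j) \<in> tensor_span \<Lambda>"
  unfolding tensor_span_def ri_def
  by (rule CollectI, rule exI[of _ "{v}"], rule exI[of _ "\<lambda>_. 1"]) auto

lemma TS_scale: "y \<in> tensor_span \<Lambda> \<Longrightarrow> (\<lambda>i j. a * y i j) \<in> tensor_span \<Lambda>"
proof -
  assume "y \<in> tensor_span \<Lambda>"
  then obtain S c where "finite S" "S \<subseteq> \<Lambda>"
    "y = (\<lambda>i j. \<Sum>v\<in>S. c v * real_of_int (v i) * real_of_int (v j))"
    unfolding tensor_span_def by auto
  then show ?thesis unfolding tensor_span_def
    by (intro CollectI exI[of _ S] exI[of _ "\<lambda>v. a * c v"])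
       (auto simp: sum_distrib_left mult.assoc)
qed

lemma TS_add:
  assumes "y \<in> tensor_span \<Lambda>" "z \<in> tensor_span \<Lambda>"
  shows "(\<lambda>i j. y i j + z i j) \<in> tensor_span \<Lambda>"
proof -
  obtain S c where S: "finite S" "S \<subseteq> \<Lambda>"
    "y = (\<lambda>i j. \<Sum>v\<in>S. c v * real_of_int (v i) * real_of_int (v j))"
    using assms(1) unfolding tensor_span_def by auto
  obtain T e where T: "finite T" "T \<subseteq> \<Lambda>"
    "z = (\<lambda>i j. \<Sum>v\<in>T. e v * real_of_int (v i) * real_of_int (v j))"
    using assms(2) unfolding tensor_span_def by auto
  define c' where "c' v = (if v \<in> S then c v else 0)" for v
  define e' where "e' v = (if v \<in> T then e v else 0)" for v
  have 1: "(\<Sum>v\<in>S. c v * real_of_int (v i) * real_of_int (v j))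
      = (\<Sum>v\<in>S \<union> T. c' v * real_of_int (v i) * real_of_int (v j))" for i j
    by (rule sum.mono_neutral_cong_left) (auto simp: S T c'_def)
  have 2: "(\<Sum>v\<in>T. e v * real_of_int (v i) * real_of_int (v j))
      = (\<Sum>v\<in>S \<union> T. e' v * real_of_int (v i) * real_of_int (v j))" for i j
    by (rule sum.mono_neutral_cong_left) (auto simp: S T e'_def)
  show ?thesis unfolding tensor_span_def
    apply (intro CollectI exI[of _ "S \<union> T"] exI[of _ "\<lambda>v. c' v + e' v"])
    using S T 1 2 by (auto simp: distrib_right sum.distrib)
qed

lemma TS_sum:
  assumes "finite S" "\<forall>v\<in>S. g v \<in> \<Lambda>"
  shows "(\<lambda>i j. \<Sum>v\<in>S. c v * ri (g v) i * ri (g v) j) \<in> tensor_span \<Lambda>"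
  using assms
proof (induction S rule: finite_induct)
  case empty
  then show ?case using TS_zero by simp
next
  case (insert x F)
  then have "(\<lambda>i j. c x * (ri (g x) i * ri (g x) j) + (\<Sum>v\<in>F. c v * ri (g v) i * ri (g v) j))
      \<in> tensor_span \<Lambda>"
    by (intro TS_add TS_scale TS_base) auto
  then show ?case using insert by (simp add: mult.assoc)
qed

lemma TS_mono: "A \<subseteq> B \<Longrightarrow> tensor_span A \<subseteq> tensor_span B"
  unfolding tensor_span_def by blast

lemma TS_sub_sym: "tensor_span \<Lambda> \<subseteq> sym_tensors \<Lambda>"
proof
  fix M assume "M \<in> tensor_span \<Lambda>"
  then obtain S c where S: "finite S" "S \<subseteq> \<Lambda>"
    "M = (\<lambda>i j. \<Sum>v\<in>S. c v * real_of_int (v i) * real_of_int (v j))"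
    unfolding tensor_span_def by auto
  have "(\<lambda>j. \<Sum>v\<in>S. (c v * real_of_int (v i)) * ri v j) \<in> real_span \<Lambda>" for i
    using S by (intro RS_sum) (auto intro: RS_base)
  then show "M \<in> sym_tensors \<Lambda>"
    unfolding sym_tensors_def using S by (auto simp: ri_def mult_ac)
qed



definition shift :: "(nat \<Rightarrow> int) \<Rightarrow> nat \<Rightarrow> int" where
  "shift v = (\<lambda>i. if i = 0 then 0 else v (i - 1))"

lemma L_closed:
  assumes "v \<in> L k H" "x \<in> L k H"
  shows "(\<lambda>i. v i - c * x i) \<in> L k H"
proof -
  have e1: "(\<Sum>i<k+2. v i - c * x i) = (\<Sum>i<k+2. v i) - c * (\<Sum>i<k+2. x i)"
    by (simp add: sum_subtractf sum_distrib_left del: sum.lessThan_Suc)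
  have e2: "(\<Sum>i<k+2. int (s H i) * (v i - c * x i))
     = (\<Sum>i<k+2. int (s H i) * v i) - c * (\<Sum>i<k+2. int (s H i) * x i)"
    by (simp add: sum_subtractf sum_distrib_left right_diff_distrib mult.left_commute
        del: sum.lessThan_Suc)
  show ?thesis using assms e1 e2 unfolding L_def by auto
qed

lemma proj_span:
  assumes closed: "\<forall>v\<in>\<Lambda>. (\<lambda>i. v i - v k * x i) \<in> \<Lambda>"
    and xk: "x k = 1" and y: "y \<in> real_span \<Lambda>" and yk: "y k = 0"
  shows "y \<in> real_span {w\<in>\<Lambda>. w k = 0}"
proof -
  obtain S c where S: "finite S" "S \<subseteq> \<Lambda>" "y = (\<lambda>i. \<Sum>v\<in>S. c v * real_of_int (v i))"
    using y unfolding real_span_def by auto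
  define g where "g v = (\<lambda>i. v i - v k * x i)" for v :: "nat \<Rightarrow> int"
  have gin: "\<forall>v\<in>S. ri (g v) \<in> real_span {w\<in>\<Lambda>. w k = 0}"
    using S closed xk by (auto intro!: RS_base simp: g_def)
  have "y i = (\<Sum>v\<in>S. c v * ri (g v) i)" for i
  proof -
    have q: "(\<Sum>v\<in>S. c v * real_of_int (v k)) * real_of_int (x i)
        = (\<Sum>v\<in>S. c v * (real_of_int (v k) * real_of_int (x i)))"
      by (simp add: sum_distrib_right mult.assoc)
    have "(\<Sum>v\<in>S. c v * ri (g v) i) = (\<Sum>v\<in>S. c v * real_of_int (v i))
        - (\<Sum>v\<in>S. c v * real_of_int (v k)) * real_of_int (x i)"
      unfolding q by (simp add: g_def ri_def sum_subtractf right_diff_distrib)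
    also have "\<dots> = y i" using S yk by simp
    finally show ?thesis by simp
  qed
  then have "y = (\<lambda>i. \<Sum>v\<in>S. c v * ri (g v) i)" by auto
  then show ?thesis using RS_sum[OF S(1) gin] by simp
qed

lemma L1_eq: "L d H = {w \<in> L (Suc d) H. w (d + 2) = 0}"
proof -
  have "(\<forall>i\<ge>d+2. w i = 0) \<longleftrightarrow> (\<forall>i\<ge>Suc d+2. w i = 0) \<and> w (d+2) = 0" for w :: "nat \<Rightarrow> int"
  proof
    assume "\<forall>i\<ge>d+2. w i = 0" then show "(\<forall>i\<ge>Suc d+2. w i = 0) \<and> w (d+2) = 0" by simp
  next
    assume A: "(\<forall>i\<ge>Suc d+2. w i = 0) \<and> w (d+2) = 0"
    show "\<forall>i\<ge>d+2. w i = 0"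
    proof (intro allI impI)
      fix i assume i: "i \<ge> d + 2"
      show "w i = 0"
      proof (cases "i = d + 2")
        case True then show ?thesis using A by simp
      next
        case False then have "i \<ge> Suc d + 2" using i by simp
        then show ?thesis using A by blast
      qed
    qed
  qed
  moreover have "(\<Sum>i<Suc d+2. w i) = (\<Sum>i<d+2. w i) + w (d+2)" for w :: "nat \<Rightarrow> int"
    by simp
  moreover have "(\<Sum>i<Suc d+2. int (s H i) * w i) = (\<Sum>i<d+2. int (s H i) * w i) + int (s H (d+2)) * w (d+2)" for w :: "nat \<Rightarrow> int"
    by simp
  ultimately show ?thesis unfolding L_def by auto
qed

lemma s_shift_int:
  assumes H2: "\<forall>h\<in>H. 2 \<le> h" and en: "enough_nonholes (d + 3) H" and im: "i < d + 2"
  shows "int (s H (Suc i)) = int (s ((\<lambda>h. h - 1) ` H) i) + 1"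
proof -
  have "enough_nonholes (Suc (d+2)) H" using en by (simp add: numeral_3_eq_3)
  from s_shift[OF H2 this im] show ?thesis by linarith
qed

lemma shift_in:
  assumes H2: "\<forall>h\<in>H. 2 \<le> h" and en: "enough_nonholes (d + 3) H"
    and v: "v \<in> L d ((\<lambda>h. h - 1) ` H)"
  shows "shift v \<in> L (Suc d) H" "shift v 0 = 0"
proof -
  let ?H' = "(\<lambda>h. h - 1) ` H"
  have sup: "\<forall>i\<ge>d+2. v i = 0" and s1: "(\<Sum>i<d+2. v i) = 0"
    and s2: "(\<Sum>i<d+2. int (s ?H' i) * v i) = 0" using v unfolding L_def by auto
  have a: "\<forall>i\<ge>Suc d+2. shift v i = 0" using sup unfolding shift_def by auto
  have b: "(\<Sum>i<Suc d+2. shift v i) = 0"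
    using s1 by (simp add: sum.lessThan_Suc_shift shift_def del: sum.lessThan_Suc)
  have "(\<Sum>i<Suc d+2. int (s H i) * shift v i) = (\<Sum>i<d+2. int (s H (Suc i)) * v i)"
    by (simp add: sum.lessThan_Suc_shift shift_def del: sum.lessThan_Suc)
  also have "\<dots> = (\<Sum>i<d+2. (int (s ?H' i) + 1) * v i)"
    using s_shift_int[OF H2 en] by (intro sum.cong) auto
  also have "\<dots> = 0" using s1 s2 by (simp add: distrib_right sum.distrib)
  finally show "shift v \<in> L (Suc d) H" using a b unfolding L_def by auto
  show "shift v 0 = 0" by (simp add: shift_def)
qed

lemma unshift_in:
  assumes H2: "\<forall>h\<in>H. 2 \<le> h" and en: "enough_nonholes (d + 3) H"
    and w: "w \<in> L (Suc d) H" and w0: "w 0 = 0"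
  shows "(\<lambda>i. w (Suc i)) \<in> L d ((\<lambda>h. h - 1) ` H)"
proof -
  let ?H' = "(\<lambda>h. h - 1) ` H"
  have sup: "\<forall>i\<ge>Suc d+2. w i = 0" and s1: "(\<Sum>i<Suc d+2. w i) = 0"
    and s2: "(\<Sum>i<Suc d+2. int (s H i) * w i) = 0" using w unfolding L_def by auto
  have a: "\<forall>i\<ge>d+2. w (Suc i) = 0" using sup by auto
  have b: "(\<Sum>i<d+2. w (Suc i)) = 0"
    using s1 w0 by (simp add: sum.lessThan_Suc_shift del: sum.lessThan_Suc)
  have "0 = (\<Sum>i<d+2. int (s H (Suc i)) * w (Suc i))"
    using s2 w0 by (simp add: sum.lessThan_Suc_shift del: sum.lessThan_Suc)
  also have "\<dots> = (\<Sum>i<d+2. (int (s ?H' i) + 1) * w (Suc i))"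
    using s_shift_int[OF H2 en] by (intro sum.cong) auto
  also have "\<dots> = (\<Sum>i<d+2. int (s ?H' i) * w (Suc i))" using b by (simp add: distrib_right sum.distrib)
  finally show ?thesis using a b unfolding L_def by auto
qed

lemma sqnorm_Suc_shift: "sqnorm (Suc k) w = (w 0)^2 + sqnorm k (\<lambda>i. w (Suc i))"
  unfolding sqnorm_def by (simp add: sum.lessThan_Suc_shift del: sum.lessThan_Suc)

lemma sqnorm_Suc: "sqnorm (Suc k) w = sqnorm k w + (w k)^2"
  unfolding sqnorm_def by simp



lemma sum_ends: "(\<Sum>i<Suc (Suc k). f i) = f 0 + (\<Sum>i<k. f (Suc i)) + (f (Suc k) :: 'a::comm_monoid_add)"
proof -
  have "(\<Sum>i<Suc (Suc k). f i) = f 0 + (\<Sum>i<Suc k. f (Suc i))" by (rule sum.lessThan_Suc_shift)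
  also have "(\<Sum>i<Suc k. f (Suc i)) = (\<Sum>i<k. f (Suc i)) + f (Suc k)" by (rule sum.lessThan_Suc)
  finally show ?thesis by (simp add: add.assoc)
qed

lemma even_sqsum:
  assumes "(\<Sum>i<n. w i) = (0::int)"
  shows "even (sqnorm n w)"
proof -
  have "sqnorm n w = (\<Sum>i<n. w i * (w i - 1)) + (\<Sum>i<n. w i)"
    unfolding sqnorm_def by (simp add: power2_eq_square sum.distrib[symmetric] algebra_simps)
  moreover have "even (\<Sum>i<n. w i * (w i - 1))" by (intro dvd_sum) auto
  ultimately show ?thesis using assms by simp
qed

lemma sq_ge1:
  assumes "(w::int) \<noteq> 0" shows "1 \<le> w^2"
proof -
  have "1 \<le> \<bar>w\<bar>^2" by (rule one_le_power) (use assms in linarith)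
  then show ?thesis by simp
qed

context
  fixes d :: nat and H :: "nat set"
  assumes d1: "d \<ge> 1" and H2: "\<forall>h\<in>H. 2 \<le> h" and en: "enough_nonholes (d+3) H"
    and min1: "has_minimum (d + 2) (L d H) 4"
    and min2: "has_minimum (d + 2) (L d ((\<lambda>h. h - 1) ` H)) 4"
begin

lemma Lmin:
  assumes w: "w \<in> L (d+1) H" and nz: "w \<noteq> (\<lambda>_. 0)"
  shows "4 \<le> sqnorm (d+3) w"
proof -
  have d3: "d + 3 = Suc (Suc (d + 1))" by simp
  show ?thesis
  proof (cases "w 0 = 0")
    case True
    let ?u = "\<lambda>i. w (Suc i)"
    have u: "?u \<in> L d ((\<lambda>h. h - 1) ` H)" using unshift_in[of H d w] H2 en True w by simp
    have "?u \<noteq> (\<lambda>_. 0)"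
    proof
      assume "?u = (\<lambda>_. 0)"
      then have "w i = 0" for i using True by (cases i) (auto dest: fun_cong)
      then show False using nz by auto
    qed
    then have "4 \<le> sqnorm (d+2) ?u" using min2 u unfolding has_minimum_def by auto
    moreover have "sqnorm (d+3) w = (w 0)^2 + sqnorm (d+2) ?u"
      using sqnorm_Suc_shift[of "d+2" w] by (simp add: numeral_3_eq_3)
    ultimately show ?thesis using zero_le_power2[of "w 0"] by linarith
  next
    case w0: False
    show ?thesis
    proof (cases "w (d+2) = 0")
      case True
      then have "w \<in> L d H" using w L1_eq[of d H] by simp
      then have "4 \<le> sqnorm (d+2) w" using min1 nz unfolding has_minimum_def by auto
      moreover have "sqnorm (d+3) w = sqnorm (d+2) w + (w (d+2))^2"
        using sqnorm_Suc[of "d+2" w] by (simp add: numeral_3_eq_3)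
      ultimately show ?thesis using True by simp
    next
      case wf: False
      have sw: "(\<Sum>i<d+3. w i) = 0" and sws: "(\<Sum>i<d+3. int (s H i) * w i) = 0"
        using w unfolding L_def by (simp_all add: numeral_3_eq_3)
      have ev: "even (sqnorm (d+3) w)" using even_sqsum[OF sw] .
      define mid where "mid = (\<Sum>i<d+1. (w (Suc i))^2)"
      have dec: "sqnorm (d+3) w = (w 0)^2 + mid + (w (d+2))^2"
        unfolding sqnorm_def mid_def d3 sum_ends by simp
      have midnn: "mid \<ge> 0" unfolding mid_def by (intro sum_nonneg) auto
      have a: "(w 0)^2 \<ge> 1" using sq_ge1[OF w0] .
      have b: "(w (d+2))^2 \<ge> 1" using sq_ge1[OF wf] .
      show ?thesis
      proof (rule ccontr)
        assume "\<not> 4 \<le> sqnorm (d + 3) w"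
        then have "sqnorm (d+3) w < 4" by simp
        moreover have "sqnorm (d+3) w \<ge> 2" using dec a b midnn by simp
        moreover from ev obtain t where t: "sqnorm (d+3) w = 2 * t" by (auto elim: evenE)
        ultimately have "t = 1" by linarith
        then have "sqnorm (d+3) w = 2" using t by simp
        then have "mid = 0" using dec a b midnn by simp
        then have mz: "\<forall>i\<in>{..<d+1}. (w (Suc i))^2 = 0"
          using sum_nonneg_eq_0_iff[of "{..<d+1}" "\<lambda>i. (w (Suc i))^2"] unfolding mid_def by auto
        then have mz': "w (Suc i) = 0" if "i < d + 1" for i using that by auto
        have "(\<Sum>i<d+1. w (Suc i)) = 0" using mz' by simp
        moreover have "(\<Sum>i<d+1. int (s H (Suc i)) * w (Suc i)) = 0" using mz' by simp
        ultimately have e1: "w 0 + w (d+2) = 0" and e2: "int (s H 0) * w 0 + int (s H (d+2)) * w (d+2) = 0"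
          using sw sws unfolding d3 sum_ends by simp_all
        have "s H 0 < s H (d+2)" using s_mono[OF en] by simp
        then have "(int (s H 0) - int (s H (d+2))) * w 0 \<noteq> 0" using w0 by simp
        moreover have "w (d+2) = - w 0" using e1 by linarith
        then have "(int (s H 0) - int (s H (d+2))) * w 0 = int (s H 0) * w 0 + int (s H (d+2)) * w (d+2)"
          by (simp add: algebra_simps)
        then have "(int (s H 0) - int (s H (d+2))) * w 0 = 0" using e2 by simp
        ultimately show False by simp
      qed
    qed
  qed
qed

end


lemma RS_mono: "A \<subseteq> B \<Longrightarrow> real_span A \<subseteq> real_span B"
  unfolding real_span_def by blast

lemma ST_mono: "A \<subseteq> B \<Longrightarrow> sym_tensors A \<subseteq> sym_tensors B"
  unfolding sym_tensors_def using RS_mono by blast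

lemma minvec_norm:
  assumes "has_minimum k \<Lambda> m" "v \<in> min_vecs k \<Lambda>"
  shows "sqnorm k v = m"
proof -
  obtain v0 where "v0 \<in> \<Lambda>" "v0 \<noteq> (\<lambda>_. 0)" "sqnorm k v0 = m"
    using assms(1) unfolding has_minimum_def by auto
  then have "sqnorm k v \<le> m" using assms(2) unfolding min_vecs_def by auto
  moreover have "m \<le> sqnorm k v" using assms unfolding has_minimum_def min_vecs_def by auto
  ultimately show ?thesis by simp
qed

lemma delta_sum:
  fixes f :: "nat \<Rightarrow> int"
  assumes "a < n"
  shows "(\<Sum>i<n. f i * (if i = a then c else 0)) = f a * c"
proof -
  have "(\<Sum>i<n. f i * (if i = a then c else 0)) = (\<Sum>i<n. if i = a then f a * c else 0)"
    by (rule sum.cong) auto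
  also have "\<dots> = f a * c" using assms by simp
  finally show ?thesis .
qed

lemma delta_sum1:
  fixes c :: int and n :: nat
  assumes "a < n"
  shows "(\<Sum>i<n. (if i = a then c else 0)) = c"
  using delta_sum[OF assms, of "\<lambda>_. 1" c] by simp

lemma rs_lin2:
  assumes "y \<in> real_span \<Lambda>" "z \<in> real_span \<Lambda>"
  shows "(\<lambda>i. p * y i + q * z i) \<in> real_span \<Lambda>"
  using assms by (intro RS_add RS_scale)

context
  fixes d :: nat and H :: "nat set"
  assumes d1: "d \<ge> 1" and H2: "\<forall>h\<in>H. 2 \<le> h" and en: "enough_nonholes (d+3) H"
    and min1: "has_minimum (d + 2) (L d H) 4"
    and min2: "has_minimum (d + 2) (L d ((\<lambda>h. h - 1) ` H)) 4"
begin

lemma MV1: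
  assumes v: "v \<in> min_vecs (d+2) (L d H)"
  shows "v \<in> min_vecs (d+3) (L (d+1) H)"
proof -
  have vL: "v \<in> L d H" and nz: "v \<noteq> (\<lambda>_. 0)" using v unfolding min_vecs_def by auto
  then have vL': "v \<in> L (d+1) H" and vf: "v (d+2) = 0" using L1_eq[of d H] by auto
  have "sqnorm (d+2) v = 4" using minvec_norm[OF min1 v] .
  moreover have "sqnorm (d+3) v = sqnorm (d+2) v + (v (d+2))^2"
    using sqnorm_Suc[of "d+2" v] by (simp add: numeral_3_eq_3)
  ultimately have "sqnorm (d+3) v = 4" using vf by simp
  then show ?thesis using vL' nz Lmin[OF d1 H2 en min1 min2] unfolding min_vecs_def by auto
qed

lemma MV2:
  assumes v: "v \<in> min_vecs (d+2) (L d ((\<lambda>h. h - 1) ` H))"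
  shows "shift v \<in> min_vecs (d+3) (L (d+1) H)"
proof -
  have vL: "v \<in> L d ((\<lambda>h. h - 1) ` H)" and nz: "v \<noteq> (\<lambda>_. 0)"
    using v unfolding min_vecs_def by auto
  have sL: "shift v \<in> L (d+1) H" using shift_in[OF H2 en vL] by simp
  have snz: "shift v \<noteq> (\<lambda>_. 0)"
  proof
    assume "shift v = (\<lambda>_. 0)"
    then have "shift v (Suc i) = 0" for i by simp
    then have "v i = 0" for i by (simp add: shift_def)
    then show False using nz by auto
  qed
  have "sqnorm (d+2) v = 4" using minvec_norm[OF min2 v] .
  moreover have "sqnorm (d+3) (shift v) = (shift v 0)^2 + sqnorm (d+2) (\<lambda>i. shift v (Suc i))"
    using sqnorm_Suc_shift[of "d+2" "shift v"] by (simp add: numeral_3_eq_3)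
  moreover have "(\<lambda>i. shift v (Suc i)) = v" by (simp add: shift_def)
  ultimately have "sqnorm (d+3) (shift v) = 4" by (simp add: shift_def)
  then show ?thesis using sL snz Lmin[OF d1 H2 en min1 min2] unfolding min_vecs_def by auto
qed

lemma G1:
  assumes perf: "perfect (d + 2) (L d H)"
  shows "sym_tensors (L d H) \<subseteq> tensor_span (min_vecs (d+3) (L (d+1) H))"
proof -
  have "sym_tensors (L d H) = tensor_span (min_vecs (d+2) (L d H))"
    using perf unfolding perfect_def by simp
  also have "\<dots> \<subseteq> tensor_span (min_vecs (d+3) (L (d+1) H))"
    by (rule TS_mono) (use MV1 in auto)
  finally show ?thesis .
qed

lemma unshift_span:
  assumes y: "y \<in> real_span {w \<in> L (d+1) H. w 0 = 0}"
  shows "(\<lambda>j. y (Suc j)) \<in> real_span (L d ((\<lambda>h. h - 1) ` H))"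
proof -
  obtain S c where S: "finite S" "S \<subseteq> {w \<in> L (d+1) H. w 0 = 0}"
    "y = (\<lambda>i. \<Sum>v\<in>S. c v * real_of_int (v i))"
    using y unfolding real_span_def by blast
  have "\<forall>v\<in>S. ri (\<lambda>i. v (Suc i)) \<in> real_span (L d ((\<lambda>h. h - 1) ` H))"
    using S(2) unshift_in[OF H2 en] by (auto intro!: RS_base)
  from RS_sum[OF S(1) this, of c] show ?thesis using S(3) by (simp add: ri_def)
qed

lemma G2:
  assumes perf: "perfect (d + 2) (L d ((\<lambda>h. h - 1) ` H))"
  shows "sym_tensors {w \<in> L (d+1) H. w 0 = 0} \<subseteq> tensor_span (min_vecs (d+3) (L (d+1) H))"
proof
  fix A assume A: "A \<in> sym_tensors {w \<in> L (d+1) H. w 0 = 0}"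
  have Asym: "A i j = A j i" for i j using A unfolding sym_tensors_def by auto
  have Arow: "A i \<in> real_span {w \<in> L (d+1) H. w 0 = 0}" for i
    using A unfolding sym_tensors_def by auto
  have A0: "A i 0 = 0" for i by (rule RS_coord0[OF _ Arow]) auto
  define At where "At = (\<lambda>i j. A (Suc i) (Suc j))"
  have "At \<in> sym_tensors (L d ((\<lambda>h. h - 1) ` H))"
    unfolding sym_tensors_def At_def using Asym unshift_span[OF Arow] by auto
  then have "At \<in> tensor_span (min_vecs (d+2) (L d ((\<lambda>h. h - 1) ` H)))"
    using perf unfolding perfect_def by simp
  then obtain S c where S: "finite S" "S \<subseteq> min_vecs (d+2) (L d ((\<lambda>h. h - 1) ` H))"
    "At = (\<lambda>i j. \<Sum>v\<in>S. c v * real_of_int (v i) * real_of_int (v j))"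
    unfolding tensor_span_def by blast
  have "A = (\<lambda>i j. \<Sum>v\<in>S. c v * ri (shift v) i * ri (shift v) j)"
  proof (intro ext)
    fix i j
    show "A i j = (\<Sum>v\<in>S. c v * ri (shift v) i * ri (shift v) j)"
    proof (cases i)
      case 0
      then show ?thesis using A0[of j] Asym[of 0 j] by (simp add: ri_def shift_def)
    next
      case (Suc i')
      show ?thesis
      proof (cases j)
        case 0
        then show ?thesis using A0[of i] by (simp add: ri_def shift_def)
      next
        case (Suc j')
        have "A i j = At i' j'" using \<open>i = Suc i'\<close> Suc by (simp add: At_def)
        then show ?thesis using S(3) \<open>i = Suc i'\<close> Suc by (simp add: ri_def shift_def)
      qed
    qed
  qed
  moreover have "\<forall>v\<in>S. shift v \<in> min_vecs (d+3) (L (d+1) H)" using S(2) MV2 by auto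
  ultimately show "A \<in> tensor_span (min_vecs (d+3) (L (d+1) H))"
    using TS_sum[OF S(1)] by simp
qed

end



theorem proposition4p1:
  fixes d :: nat and H :: "nat set"
  assumes "d \<ge> 1"
    and "0 \<notin> H"
    and "H \<noteq> {}" and "\<forall>h\<in>H. 2 \<le> h"
    and "enough_nonholes (d + 3) H"
    and "perfect (d + 2) (L d H)" and "has_minimum (d + 2) (L d H) 4"
    and "perfect (d + 2) (L d ((\<lambda>h. h - 1) ` H))"
    and "has_minimum (d + 2) (L d ((\<lambda>h. h - 1) ` H)) 4"
    and "\<exists>x\<in>L (d + 1) H. sqnorm (d + 3) x = 4 \<and> x 0 = 1 \<and> x (d + 2) = 1"
  shows "perfect (d + 3) (L (d + 1) H)"
proof -
  note d1 = assms(1) and H2 = assms(4) and en = assms(5) and perf1 = assms(6)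
    and min1 = assms(7) and perf2 = assms(8) and min2 = assms(9)
  let ?Lp = "L (d + 1) H"
  let ?T = "tensor_span (min_vecs (d+3) ?Lp)"
  let ?V = "real_span ?Lp"
  obtain x where xL: "x \<in> ?Lp" and xn: "sqnorm (d + 3) x = 4" and x0: "x 0 = 1" and xf: "x (d+2) = 1"
    using assms(10) by blast
  have xmin: "x \<in> min_vecs (d+3) ?Lp"
  proof -
    have "x \<noteq> (\<lambda>_. 0)" using x0 by auto
    then show ?thesis using xL xn Lmin[OF d1 H2 en min1 min2] unfolding min_vecs_def by auto
  qed
  have closed: "\<forall>v\<in>?Lp. \<forall>k. (\<lambda>i. v i - v k * x i) \<in> ?Lp" using xL L_closed by blast
  define \<sigma> where "\<sigma> i = int (s H i)" for i
  define kk where "kk = \<sigma> 2 - \<sigma> 1"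
  define z where "z i = (if i = 0 then kk else 0) + (if i = 1 then \<sigma> 0 - \<sigma> (d+2) else 0)
     + (if i = 2 then \<sigma> (d+2) - \<sigma> 0 else 0) + (if i = d + 2 then - kk else 0)" for i
  have kpos: "kk > 0" unfolding kk_def \<sigma>_def using s_mono[OF en, of 1 2] by simp
  have zL: "z \<in> ?Lp"
  proof -
    have a: "\<forall>i\<ge>d+1+2. z i = 0" unfolding z_def by auto
    have b: "(\<Sum>i<d+1+2. z i) = 0"
      unfolding z_def using d1 by (simp add: sum.distrib delta_sum1 del: sum.lessThan_Suc)
    have "(\<Sum>i<d+1+2. int (s H i) * z i) = \<sigma> 0 * kk + \<sigma> 1 * (\<sigma> 0 - \<sigma> (d+2))
       + \<sigma> 2 * (\<sigma> (d+2) - \<sigma> 0) + \<sigma> (d+2) * (- kk)"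
      unfolding z_def \<sigma>_def[symmetric] using d1
      by (simp add: distrib_left sum.distrib delta_sum del: sum.lessThan_Suc)
    also have "\<dots> = 0" unfolding kk_def by (simp add: algebra_simps)
    finally show ?thesis using a b unfolding L_def by auto
  qed
  have z0: "z 0 = kk" and zf: "z (d+2) = - kk" unfolding z_def using d1 by auto
  define X where "X = ri x"
  define a where "a i = (1/2) * X i + (- 1 / (2 * real_of_int kk)) * ri z i" for i
  define b where "b i = (1/2) * X i + (1 / (2 * real_of_int kk)) * ri z i" for i
  have aV: "a \<in> ?V" unfolding a_def[abs_def] X_def by (intro rs_lin2 RS_base xL zL)
  have bV: "b \<in> ?V" unfolding b_def[abs_def] X_def by (intro rs_lin2 RS_base xL zL)
  have a0: "a 0 = 0" and af: "a (d+2) = 1" and b0: "b 0 = 1" and bf: "b (d+2) = 0"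
  proof -
    have "x (Suc (Suc d)) = 1" "z (Suc (Suc d)) = - kk" using xf zf by simp_all
    then show "a 0 = 0" "a (d+2) = 1" "b 0 = 1" "b (d+2) = 0"
      using kpos unfolding a_def b_def X_def ri_def by (simp_all add: x0 z0 field_simps)
  qed
  have Xab: "X i = a i + b i" for i unfolding a_def b_def by (simp add: field_simps)
  have P1: "y \<in> real_span (L d H)" if "y \<in> ?V" "y (d+2) = 0" for y
  proof -
    have "y \<in> real_span {w \<in> ?Lp. w (d+2) = 0}"
      using proj_span[of ?Lp "d+2" x y] closed xf that by blast
    then show ?thesis using L1_eq[of d H] by simp
  qed
  have P2: "y \<in> real_span {w \<in> ?Lp. w 0 = 0}" if "y \<in> ?V" "y 0 = 0" for y
    using proj_span[of ?Lp 0 x y] closed x0 that by blast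
  have "sym_tensors ?Lp \<subseteq> ?T"
  proof
    fix M assume M: "M \<in> sym_tensors ?Lp"
    have Msym: "M i j = M j i" for i j using M unfolding sym_tensors_def by auto
    have Mrow: "M i \<in> ?V" for i using M unfolding sym_tensors_def by auto
    define r where "r = M (d+2)"
    define re where "re = M (d+2) 0"
    define mff where "mff = M (d+2) (d+2)"
    define u where "u j = 1 * r j + (- re) * b j" for j
    have rV: "r \<in> ?V" unfolding r_def by (rule Mrow)
    have uV: "u \<in> ?V" unfolding u_def[abs_def] by (intro rs_lin2 rV bV)
    define A1 where "A1 i j = M i j - a i * r j - r i * a j + mff * a i * a j - re * b i * b j" for i j
    define A2 where "A2 i j = a i * u j + u i * a j - (mff + re) * a i * a j" for i j
    have A1S: "A1 \<in> sym_tensors (L d H)"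
    proof -
      have "A1 i \<in> real_span (L d H)" for i
      proof (rule P1)
        have "(\<lambda>j. 1 * M i j + (- a i) * r j + (- r i) * a j + (mff * a i) * a j + (- (re * b i)) * b j) \<in> ?V"
          by (intro RS_add RS_scale Mrow rV aV bV)
        moreover have "(\<lambda>j. 1 * M i j + (- a i) * r j + (- r i) * a j + (mff * a i) * a j + (- (re * b i)) * b j) = A1 i"
          unfolding A1_def by (auto simp: algebra_simps)
        ultimately show "A1 i \<in> ?V" by simp
        show "A1 i (d+2) = 0" unfolding A1_def r_def mff_def using af bf Msym[of i "d+2"] by simp
      qed
      moreover have "A1 i j = A1 j i" for i j unfolding A1_def r_def using Msym[of i j] by (simp add: algebra_simps)
      ultimately show ?thesis unfolding sym_tensors_def by auto
    qed
    have A2S: "A2 \<in> sym_tensors {w \<in> ?Lp. w 0 = 0}"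
    proof -
      have "A2 i \<in> real_span {w \<in> ?Lp. w 0 = 0}" for i
      proof (rule P2)
        have "(\<lambda>j. a i * u j + u i * a j + (- (mff + re) * a i) * a j) \<in> ?V"
          by (intro RS_add RS_scale uV aV)
        moreover have "(\<lambda>j. a i * u j + u i * a j + (- (mff + re) * a i) * a j) = A2 i"
          unfolding A2_def by (auto simp: algebra_simps)
        ultimately show "A2 i \<in> ?V" by simp
        show "A2 i 0 = 0" unfolding A2_def u_def r_def re_def using a0 b0 by simp
      qed
      moreover have "A2 i j = A2 j i" for i j unfolding A2_def by (simp add: algebra_simps)
      ultimately show ?thesis unfolding sym_tensors_def by auto
    qed
    have "M = (\<lambda>i j. A1 i j + A2 i j + re * (ri x i * ri x j))"
    proof (intro ext)
      fix i j
      show "M i j = A1 i j + A2 i j + re * (ri x i * ri x j)"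
        unfolding A1_def A2_def u_def X_def[symmetric] Xab by (simp add: algebra_simps)
    qed
    moreover have "(\<lambda>i j. A1 i j + A2 i j + re * (ri x i * ri x j)) \<in> ?T"
    proof (intro TS_add TS_scale TS_base xmin)
      show "A1 \<in> ?T" using A1S G1[OF d1 H2 en min1 min2 perf1] by blast
      show "A2 \<in> ?T" using A2S G2[OF d1 H2 en min1 min2 perf2] by blast
    qed
    ultimately show "M \<in> ?T" by simp
  qed
  moreover have "?T \<subseteq> sym_tensors ?Lp"
    using TS_sub_sym ST_mono[of "min_vecs (d+3) ?Lp" ?Lp] unfolding min_vecs_def by blast
  ultimately show ?thesis unfolding perfect_def by blast
qed


end
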